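(* Let $\Sigma_1,\Sigma_2$ be two discrete-time stochastic linear control systems as described in the context. (a) If $\Sigma_1\cong_{\mathrm{lin}}\Sigma_2$, then $\Sigma_1\cong_{\mathrm{bis}}\Sigma_2$. (b) If $\Sigma_1\cong_{\mathrm{bis}}\Sigma_2$, then $\Sigma_1\cong_{\mathrm{ext}}\Sigma_2$.
   Context: For $i=1,2$, $\Sigma_i$ is the system $x_i(t+1)=A_ix_i(t)+B_iu(t)+G_iw_i(t)$, $y_i(t)=C_ix_i(t)+\nu_i(t)$, $t\in\mathbb{N}$, with $x_i\in\mathbb{R}^{n_i}$, $u\in\mathbb{R}^m$, $w_i\in\mathbb{R}^{l_i}$, $y_i,\nu_i\in\mathbb{R}^p$, where $(w_i(t))_t$ is i.i.d. with $w_i(t)\sim\mathcal N(\mu_i,I_{l_i})$, $(\nu_i(t))_t$ is i.i.d. with $\nu_i(t)\sim\mathcal N(0,\Psi_i)$ ($\Psi_i$ symmetric positive semidefinite), and the two sequences are mutually independent. For a deterministic initial state $x_i^0$ and deterministic input sequence $\mathbf u:\mathbb N\to\mathbb R^m$, $\mathbf x_i|_{x_i^0,\mathbf u}(t)=A_i^tx_i^0+\sum_{\tau=0}^{t-1}A_i^{t-1-\tau}(B_iu(\tau)+G_iw_i(\tau))$ and $\mathbf y_i|_{x_i^0,\mathbf u}(t)=C_i\mathbf x_i|_{x_i^0,\mathbf u}(t)+\nu_i(t)$; $\mathbf P(\cdot\mid x_i^0)$ denotes probability for the process started at $x_i^0$. Two stochastic processes are stochastically equivalent, written $\sim$, if all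 their finite-dimensional joint distributions coincide. For a random vector $v$, $\mathrm{supp}(v)=\{z:\mathbf P(v\in B_\rho(z))>0\ \forall\rho>0\}$. For a relation $\mathcal R\subseteq\mathbb R^{n_1}\times\mathbb R^{n_2}$, $\mathcal R(X_1)=\{x_2:\exists x_1\in X_1,(x_1,x_2)\in\mathcal R\}$, $\mathcal R^{-1}(X_2)=\{x_1:\exists x_2\in X_2,(x_1,x_2)\in\mathcal R\}$; $\mathcal R$ is total if $\mathcal R(\mathbb R^{n_1})=\mathbb R^{n_2}$ and $\mathcal R^{-1}(\mathbb R^{n_2})=\mathbb R^{n_1}$. Linear equivalence: $\Sigma_1\cong_{\mathrm{lin}}\Sigma_2$ if $\Psi_1=\Psi_2$, $n_1=n_2$ and there is an invertible $\mathbb T$ with $A_2=\mathbb TA_1\mathbb T^{-1}$, $B_2=\mathbb TB_1$, $C_2=C_1\mathbb T^{-1}$, $G_2=\mathbb TG_1$, $G_2\mu_2=\mathbb TG_1\mu_1$. External equivalence: for a subspace $\mathcal R\subseteq\mathbb R^{n_1}\times\mathbb R^{n_2}$, $\Sigma_1,\Sigma_2$ have equivalent stochastic external behavior with respect to $\mathcal R$ if $\mathbf y_1|_{x_1^0,\mathbf u}\sim\mathbf y_2|_{x_2^0,\mathbf u}$ for all $(x_1^0,x_2^0)\in\mathcal R$ and all inputs $\mathbf u$; $\Sigma_1\cong_{\mathrm{ext}}\Sigma_2$ if this holds for some total subspace $\mathcal R$. Stochastic bisimulation: a subspace $\mathcal R\subseteq\mathbb R^{n_1}\times\mathbb R^{n_2}$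 is a stochastic bisimulation relation between $\Sigma_1,\Sigma_2$ if for every $(x_1^0,x_2^0)\in\mathcal R$, every input $\mathbf u$ and every $t\in\mathbb N$: (i) for every measurable $X_1\subseteq\mathcal R^{-1}(\mathbb R^{n_2})$, $\mathbf P(\mathbf x_1|_{x_1^0,\mathbf u}(t)\in X_1\mid x_1^0)=\mathbf P(\mathbf x_2|_{x_2^0,\mathbf u}(t)\in\mathcal R(X_1\cap\mathrm{supp}(\mathbf x_1|_{x_1^0,\mathbf u}(t)))\mid x_2^0)$; (ii) for every measurable $X_2\subseteq\mathcal R(\mathbb R^{n_1})$, $\mathbf P(\mathbf x_2|_{x_2^0,\mathbf u}(t)\in X_2\mid x_2^0)=\mathbf P(\mathbf x_1|_{x_1^0,\mathbf u}(t)\in\mathcal R^{-1}(X_2\cap\mathrm{supp}(\mathbf x_2|_{x_2^0,\mathbf u}(t)))\mid x_1^0)$; (iii) $\mathbf y_1|_{x_1^0,\mathbf u}\sim\mathbf y_2|_{x_2^0,\mathbf u}$. $\Sigma_1\cong_{\mathrm{bis}}\Sigma_2$ if a total stochastic bisimulation relation between them exists. *)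

theory Defs
  imports "HOL-Analysis.Analysis" "HOL-Probability.Probability"
begin

text \<open>A discrete-time stochastic linear control system
  x(t+1) = A x(t) + B u(t) + G w(t),  y(t) = C x(t) + nu(t),
  with w(t) iid N(mu, I) and nu(t) iid N(0, Psi).
  State space real^'n, input real^'m, noise real^'l, output real^'p.\<close>

record ('n, 'm, 'l, 'p) slsys =
  sysA :: "real^'n^'n"
  sysB :: "real^'m^'n"
  sysG :: "real^'l^'n"
  sysC :: "real^'n^'p"
  sysMu :: "real^'l"
  sysPsi :: "real^'p^'p"

text \<open>Standing assumption: Psi symmetric positive semidefinite.\<close>
definition valid_sys :: "('n::finite, 'm::finite, 'l::finite, 'p::finite) slsys \<Rightarrow> bool" where
  "valid_sys S \<longleftrightarrow> transpose (sysPsi S) = sysPsi S \<and> (\<forall>x. 0 \<le> x \<bullet> (sysPsi S *v x))"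

text \<open>Standard Gaussian N(0,I) on real^'l (independent standard normal coordinates).\<close>
definition std_gauss :: "(real^'l::finite) measure" where
  "std_gauss = distr (PiM (UNIV::'l set) (\<lambda>_. density lborel std_normal_density)) borel
                     (\<lambda>f. \<chi> i. f i)"

text \<open>Gaussian N(m,S) for positive semidefinite S: image of N(0,I) under z \<mapsto> m + L z
  with L L^T = S (the law does not depend on the choice of L).\<close>
definition gaussian_vec :: "real^'l::finite \<Rightarrow> real^'l^'l \<Rightarrow> (real^'l) measure" where
  "gaussian_vec m S = distr (std_gauss :: (real^'l) measure) borel (\<lambda>z. m + (SOME L. L ** transpose L = S) *v z)"

text \<open>Canonical probability space of the noises: w = (w(t))_t iid N(mu,I),
  nu = (nu(t))_t iid N(0,Psi), the two sequences independent.\<close>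
definition noise_space ::
  "('n::finite, 'm::finite, 'l::finite, 'p::finite) slsys \<Rightarrow> ((nat \<Rightarrow> real^'l) \<times> (nat \<Rightarrow> real^'p)) measure" where
  "noise_space S =
     (PiM (UNIV::nat set) (\<lambda>_. gaussian_vec (sysMu S) (mat 1)))
     \<Otimes>\<^sub>M (PiM (UNIV::nat set) (\<lambda>_. gaussian_vec 0 (sysPsi S)))"

text \<open>State trajectory x|_{x0,u}(t) as a function of the noise sample.\<close>
primrec state_traj ::
  "('n::finite, 'm::finite, 'l::finite, 'p::finite) slsys \<Rightarrow> real^'n \<Rightarrow> (nat \<Rightarrow> real^'m)
     \<Rightarrow> (nat \<Rightarrow> real^'l) \<times> (nat \<Rightarrow> real^'p) \<Rightarrow> nat \<Rightarrow> real^'n" where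
  "state_traj S x0 u \<omega> 0 = x0"
| "state_traj S x0 u \<omega> (Suc t) =
     sysA S *v state_traj S x0 u \<omega> t + sysB S *v u t + sysG S *v (fst \<omega> t)"

text \<open>Output trajectory y|_{x0,u}(t) = C x(t) + nu(t).\<close>
definition out_traj ::
  "('n::finite, 'm::finite, 'l::finite, 'p::finite) slsys \<Rightarrow> real^'n \<Rightarrow> (nat \<Rightarrow> real^'m)
     \<Rightarrow> nat \<Rightarrow> (nat \<Rightarrow> real^'l) \<times> (nat \<Rightarrow> real^'p) \<Rightarrow> real^'p" where
  "out_traj S x0 u t \<omega> = sysC S *v state_traj S x0 u \<omega> t + snd \<omega> t"

text \<open>Law of the state x|_{x0,u}(t).\<close>
definition state_dist ::
  "('n::finite, 'm::finite, 'l::finite, 'p::finite) slsys \<Rightarrow> real^'n \<Rightarrow> (nat \<Rightarrow> real^'m)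
     \<Rightarrow> nat \<Rightarrow> (real^'n) measure" where
  "state_dist S x0 u t = distr (noise_space S) borel (\<lambda>\<omega>. state_traj S x0 u \<omega> t)"

text \<open>Support of a random vector with law D.\<close>
definition supp_dist :: "('a::metric_space) measure \<Rightarrow> 'a set" where
  "supp_dist D = {z. \<forall>\<rho>>0. measure D (ball z \<rho>) > 0}"

text \<open>Stochastic equivalence of processes: all finite-dimensional joint laws coincide.\<close>
definition stoch_equiv ::
  "'a measure \<Rightarrow> (nat \<Rightarrow> 'a \<Rightarrow> 'c::topological_space) \<Rightarrow> 'b measure \<Rightarrow> (nat \<Rightarrow> 'b \<Rightarrow> 'c) \<Rightarrow> bool" where
  "stoch_equiv M1 X1 M2 X2 \<longleftrightarrow>
     (\<forall>J. finite J \<longrightarrow>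
        distr M1 (PiM J (\<lambda>_. borel)) (\<lambda>\<omega>. \<lambda>t\<in>J. X1 t \<omega>) =
        distr M2 (PiM J (\<lambda>_. borel)) (\<lambda>\<omega>. \<lambda>t\<in>J. X2 t \<omega>))"

definition total_rel :: "('a \<times> 'b) set \<Rightarrow> bool" where
  "total_rel R \<longleftrightarrow> R `` UNIV = UNIV \<and> converse R `` UNIV = UNIV"

text \<open>Linear equivalence.\<close>
text \<open>Linear equivalence (G_2 = T G_1 forces l_1 = l_2, so both systems share the
  noise index type 'l).\<close>
definition lin_equiv ::
  "('n1::finite, 'm::finite, 'l::finite, 'p::finite) slsys \<Rightarrow>
   ('n2::finite, 'm, 'l, 'p) slsys \<Rightarrow> bool" where
  "lin_equiv S1 S2 \<longleftrightarrow> sysPsi S1 = sysPsi S2 \<and> CARD('n1) = CARD('n2) \<and>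
     (\<exists>(T::real^'n1^'n2) (Ti::real^'n2^'n1). T ** Ti = mat 1 \<and> Ti ** T = mat 1 \<and>
        sysA S2 = T ** sysA S1 ** Ti \<and> sysB S2 = T ** sysB S1 \<and>
        sysC S2 = sysC S1 ** Ti \<and> sysG S2 = T ** sysG S1 \<and>
        sysG S2 *v sysMu S2 = T *v (sysG S1 *v sysMu S1))"

text \<open>Equivalent stochastic external behaviour w.r.t. R.\<close>
definition ext_equiv_wrt ::
  "('n1::finite, 'm::finite, 'l1::finite, 'p::finite) slsys \<Rightarrow>
   ('n2::finite, 'm, 'l2::finite, 'p) slsys \<Rightarrow> ((real^'n1) \<times> (real^'n2)) set \<Rightarrow> bool" where
  "ext_equiv_wrt S1 S2 R \<longleftrightarrow>
     (\<forall>x1 x2 u. (x1, x2) \<in> R \<longrightarrow>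
        stoch_equiv (noise_space S1) (\<lambda>t. out_traj S1 x1 u t) (noise_space S2) (\<lambda>t. out_traj S2 x2 u t))"

definition ext_equiv ::
  "('n1::finite, 'm::finite, 'l1::finite, 'p::finite) slsys \<Rightarrow>
   ('n2::finite, 'm, 'l2::finite, 'p) slsys \<Rightarrow> bool" where
  "ext_equiv S1 S2 \<longleftrightarrow> (\<exists>R. subspace R \<and> total_rel R \<and> ext_equiv_wrt S1 S2 R)"

text \<open>Stochastic bisimulation relation.\<close>
definition stoch_bisim ::
  "('n1::finite, 'm::finite, 'l1::finite, 'p::finite) slsys \<Rightarrow>
   ('n2::finite, 'm, 'l2::finite, 'p) slsys \<Rightarrow> ((real^'n1) \<times> (real^'n2)) set \<Rightarrow> bool" where
  "stoch_bisim S1 S2 R \<longleftrightarrow> subspace R \<and>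
     (\<forall>x1 x2 u t. (x1, x2) \<in> R \<longrightarrow>
        (\<forall>X1 \<in> sets borel. X1 \<subseteq> converse R `` UNIV \<longrightarrow>
           measure (state_dist S1 x1 u t) X1 =
           measure (state_dist S2 x2 u t) (R `` (X1 \<inter> supp_dist (state_dist S1 x1 u t)))) \<and>
        (\<forall>X2 \<in> sets borel. X2 \<subseteq> R `` UNIV \<longrightarrow>
           measure (state_dist S2 x2 u t) X2 =
           measure (state_dist S1 x1 u t) (converse R `` (X2 \<inter> supp_dist (state_dist S2 x2 u t)))) \<and>
        stoch_equiv (noise_space S1) (\<lambda>t. out_traj S1 x1 u t) (noise_space S2) (\<lambda>t. out_traj S2 x2 u t))"

definition bis_equiv ::
  "('n1::finite, 'm::finite, 'l1::finite, 'p::finite) slsys \<Rightarrow>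
   ('n2::finite, 'm, 'l2::finite, 'p) slsys \<Rightarrow> bool" where
  "bis_equiv S1 S2 \<longleftrightarrow> (\<exists>R. total_rel R \<and> stoch_bisim S1 S2 R)"

end

theory Submission
  imports Defs
begin


lemma meas_vec_lambda:
  "(\<lambda>f. \<chi> i. f i) \<in> measurable (PiM (UNIV::'l::finite set) (\<lambda>_. borel)) (borel :: (real^'l) measure)"
proof -
  have "\<forall>b\<in>Basis. (\<lambda>f. (\<chi> i. f i) \<bullet> b) \<in> borel_measurable (PiM (UNIV::'l set) (\<lambda>_. (borel::real measure)))"
  proof
    fix b :: "real^'l" assume "b \<in> Basis"
    then obtain j where b: "b = axis j 1" by (auto simp: Basis_vec_def)
    have "(\<lambda>f. (\<chi> i. f i) \<bullet> b) = (\<lambda>f. f j)" by (simp add: b inner_axis)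
    then show "(\<lambda>f. (\<chi> i. f i) \<bullet> b) \<in> borel_measurable (PiM (UNIV::'l set) (\<lambda>_. (borel::real measure)))"
      by simp
  qed
  then show ?thesis by (subst borel_measurable_euclidean_space) auto
qed

lemma mv_meas[measurable]: "(\<lambda>x. (A::real^'n::finite^'m::finite) *v x) \<in> borel_measurable borel"
  by (intro borel_measurable_continuous_onI linear_continuous_on matrix_vector_mul_linear_gen bounded_linearI')
     (auto simp: matrix_vector_right_distrib matrix_vector_mult_scaleR)

lemma prob_std_gauss: "prob_space (std_gauss :: (real^'l::finite) measure)"
proof -
  have "sets (PiM (UNIV::'l set) (\<lambda>_. density lborel std_normal_density)) = sets (PiM UNIV (\<lambda>_. borel))"
    by (intro sets_PiM_cong) auto
  then have m: "(\<lambda>f. \<chi> i. f i) \<in> measurable (PiM (UNIV::'l set) (\<lambda>_. density lborel std_normal_density)) (borel :: (real^'l) measure)"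
    using meas_vec_lambda measurable_cong_sets by blast
  show ?thesis unfolding std_gauss_def
    by (intro prob_space.prob_space_distr prob_space_PiM prob_space_normal_density m) auto
qed

lemma sets_std_gauss[simp, measurable_cong]: "sets (std_gauss :: (real^'l::finite) measure) = sets borel"
  by (simp add: std_gauss_def)

lemma sets_gaussian_vec[simp, measurable_cong]: "sets (gaussian_vec (m::real^'l::finite) S) = sets borel"
  by (simp add: gaussian_vec_def)

lemma prob_gaussian_vec: "prob_space (gaussian_vec (m::real^'l::finite) S)"
  unfolding gaussian_vec_def
  by (intro prob_space.prob_space_distr prob_std_gauss) simp

lemma prob_noise: "prob_space (noise_space S)"
  unfolding noise_space_def
  by (intro prob_space_pair prob_space_PiM prob_gaussian_vec)

lemma distr_PiM_comp:
  assumes M: "\<And>i. i \<in> I \<Longrightarrow> prob_space (M i)"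
  assumes f: "\<And>i. i \<in> I \<Longrightarrow> f i \<in> measurable (M i) (N i)"
  shows "distr (PiM I M) (PiM I N) (\<lambda>\<omega>. \<lambda>i\<in>I. f i (\<omega> i)) = PiM I (\<lambda>i. distr (M i) (N i) (f i))"
    (is "distr ?K ?N ?t = ?I")
proof (rule measure_eqI_PiM_infinite[symmetric, where M=N])
  interpret prob_space ?I
    using f M by (intro prob_space_PiM prob_space.prob_space_distr) auto
  show "finite_measure ?I"
    by unfold_locales
  show "sets ?I = sets ?N" by (intro sets_PiM_cong) auto
  show "sets (distr ?K ?N ?t) = sets ?N" by simp
  fix A J assume J: "finite J" "J \<subseteq> I" and A: "\<And>i. i \<in> J \<Longrightarrow> A i \<in> sets (N i)"
  have pe: "prod_emb I N J (Pi\<^sub>E J A) = prod_emb I (\<lambda>i. distr (M i) (N i) (f i)) J (Pi\<^sub>E J A)"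
    by (simp add: prod_emb_def)
  have "?I (prod_emb I N J (Pi\<^sub>E J A)) = (\<Prod>j\<in>J. distr (M j) (N j) (f j) (A j))"
    unfolding pe using f J A M by (intro emeasure_PiM_emb prob_space.prob_space_distr) auto
  also have "\<dots> = (\<Prod>j\<in>J. M j (f j -` A j \<inter> space (M j)))"
    using J A f by (intro prod.cong refl emeasure_distr) auto
  also have "\<dots> = ?K (prod_emb I M J (\<Pi>\<^sub>E j\<in>J. f j -` A j \<inter> space (M j)))"
    using f J A by (intro emeasure_PiM_emb[symmetric] M) (auto)
  also have "prod_emb I M J (\<Pi>\<^sub>E j\<in>J. f j -` A j \<inter> space (M j)) = ?t -` prod_emb I N J (Pi\<^sub>E J A) \<inter> space ?K"
    using f J A by (auto simp: prod_emb_def space_PiM Pi_iff PiE_iff measurable_space subsetD)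
       (meson measurable_space)
  also have "?K \<dots> = distr ?K ?N ?t (prod_emb I N J (Pi\<^sub>E J A))"
  proof (rule emeasure_distr[symmetric])
    show "?t \<in> measurable ?K ?N"
      using f by (intro measurable_restrict) (auto intro: measurable_compose[OF measurable_component_singleton])
    show "prod_emb I N J (Pi\<^sub>E J A) \<in> sets ?N" using J A by (intro sets_PiM_I) auto
  qed
  finally show "?I (prod_emb I N J (Pi\<^sub>E J A)) = distr ?K ?N ?t (prod_emb I N J (Pi\<^sub>E J A))" .
qed

primrec trj :: "real^'n::finite^'n \<Rightarrow> real^'m::finite^'n \<Rightarrow> real^'n \<Rightarrow> (nat \<Rightarrow> real^'m) \<Rightarrow> (nat \<Rightarrow> real^'n) \<Rightarrow> nat \<Rightarrow> real^'n" where
  "trj A B x u v 0 = x"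
| "trj A B x u v (Suc t) = A *v trj A B x u v t + B *v u t + v t"

lemma state_traj_trj: "state_traj S x u \<omega> t = trj (sysA S) (sysB S) x u (\<lambda>t. sysG S *v fst \<omega> t) t"
  by (induct t) auto

lemma trj_meas[measurable]: "(\<lambda>v. trj A B x u v t) \<in> borel_measurable (PiM UNIV (\<lambda>_. borel))"
proof (induct t)
  case 0 then show ?case by simp
next
  case (Suc t)
  note [measurable] = Suc
  show ?case by simp
qed

lemma gv_eq:
  fixes G :: "real^'l::finite^'k::finite"
  assumes "G *v m = G *v m'"
  shows "distr (gaussian_vec m S) borel (\<lambda>z. G *v z) = distr (gaussian_vec m' S) borel (\<lambda>z. G *v z)"
proof -
  have "distr (gaussian_vec m S) borel (\<lambda>z. G *v z) = distr std_gauss borel (\<lambda>z. G *v (m + (SOME L::real^'l^'l. L ** transpose L = S) *v z))"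
    unfolding gaussian_vec_def by (subst distr_distr) (auto simp: comp_def)
  also have "\<dots> = distr std_gauss borel (\<lambda>z. G *v (m' + (SOME L::real^'l^'l. L ** transpose L = S) *v z))"
    using assms by (intro distr_cong) (auto simp: matrix_vector_right_distrib)
  also have "\<dots> = distr (gaussian_vec m' S) borel (\<lambda>z. G *v z)"
    unfolding gaussian_vec_def by (subst distr_distr) (auto simp: comp_def)
  finally show ?thesis .
qed

definition piG :: "real^'l::finite^'k::finite \<Rightarrow> (nat \<Rightarrow> real^'l) \<times> (nat \<Rightarrow> real^'p) \<Rightarrow> (nat \<Rightarrow> real^'k) \<times> (nat \<Rightarrow> real^'p)" where
  "piG G \<omega> = ((\<lambda>t. G *v fst \<omega> t), snd \<omega>)"

abbreviation "PB \<equiv> PiM (UNIV::nat set) (\<lambda>_. borel)"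

lemma sets_noise: "sets (noise_space S) = sets (PB \<Otimes>\<^sub>M PB)"
  unfolding noise_space_def
  by (intro sets_pair_measure_cong sets_PiM_cong) auto

lemma piG_meas: "piG G \<in> measurable (noise_space S) (PB \<Otimes>\<^sub>M PB)"
proof -
  have "piG G \<in> measurable (PB \<Otimes>\<^sub>M PB) (PB \<Otimes>\<^sub>M PB)"
  proof -
    have m1: "(\<lambda>x. \<lambda>t\<in>UNIV. G *v fst x t) \<in> measurable (PB \<Otimes>\<^sub>M PB) PB"
      by (intro measurable_restrict measurable_compose[OF _ mv_meas] measurable_compose[OF measurable_fst measurable_component_singleton]) auto
    have e: "piG G = (\<lambda>x. (\<lambda>t\<in>UNIV. G *v fst x t, snd x))"
      by (auto simp: piG_def fun_eq_iff)
    show ?thesis unfolding e by (rule measurable_Pair[OF m1 measurable_snd])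
  qed
  then show ?thesis using measurable_cong_sets[OF sets_noise refl] by blast
qed

lemma transfer:
  fixes S :: "('n::finite, 'm::finite, 'l::finite, 'p::finite) slsys"
    and S' :: "('n2::finite, 'm2::finite, 'l, 'p) slsys"
    and G :: "real^'l^'k::finite"
  assumes "sysPsi S = sysPsi S'" "G *v sysMu S = G *v sysMu S'"
  shows "distr (noise_space S) (PB \<Otimes>\<^sub>M PB) (piG G) = distr (noise_space S') (PB \<Otimes>\<^sub>M PB) (piG G)"
proof -
  let ?V = "PiM (UNIV::nat set) (\<lambda>_. gaussian_vec 0 (sysPsi S))"
  let ?g = "\<lambda>w. \<lambda>t\<in>UNIV. G *v w t"
  have pg: "piG G = (\<lambda>(x, y). (?g x, (\<lambda>y. y) y))" by (auto simp: piG_def restrict_def fun_eq_iff)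
  have gm: "?g \<in> measurable (PiM UNIV (\<lambda>_. gaussian_vec mu (mat 1))) PB" for mu :: "real^'l"
    by (intro measurable_restrict) (auto intro: measurable_compose[OF measurable_component_singleton])
  have im: "(\<lambda>y. y) \<in> measurable ?V PB"
    by (intro measurable_ident_sets sets_PiM_cong) auto
  have sf: "sigma_finite_measure (distr ?V PB (\<lambda>y. y))"
    by (intro prob_space_imp_sigma_finite prob_space.prob_space_distr prob_space_PiM prob_gaussian_vec im)
  have d: "distr (PiM UNIV (\<lambda>_. gaussian_vec mu (mat 1))) PB ?g = PiM UNIV (\<lambda>_. distr (gaussian_vec mu (mat 1)) borel (\<lambda>z. G *v z))" for mu :: "real^'l"
    by (rule distr_PiM_comp) (auto intro: prob_gaussian_vec)
  have "distr (noise_space S) (PB \<Otimes>\<^sub>M PB) (piG G) = PiM UNIV (\<lambda>_. distr (gaussian_vec (sysMu S) (mat 1)) borel (\<lambda>z. G *v z)) \<Otimes>\<^sub>M distr ?V PB (\<lambda>y. y)"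
    unfolding noise_space_def pg by (subst pair_measure_distr[OF gm im sf, symmetric]) (simp add: d)
  also have "\<dots> = PiM UNIV (\<lambda>_. distr (gaussian_vec (sysMu S') (mat 1)) borel (\<lambda>z. G *v z)) \<Otimes>\<^sub>M distr ?V PB (\<lambda>y. y)"
    using gv_eq[OF assms(2)] by simp
  also have "\<dots> = distr (noise_space S') (PB \<Otimes>\<^sub>M PB) (piG G)"
  proof -
    let ?V' = "PiM (UNIV::nat set) (\<lambda>_. gaussian_vec 0 (sysPsi S'))"
    have im': "(\<lambda>y. y) \<in> measurable ?V' PB"
      by (intro measurable_ident_sets sets_PiM_cong) auto
    have sf': "sigma_finite_measure (distr ?V' PB (\<lambda>y. y))"
      by (intro prob_space_imp_sigma_finite prob_space.prob_space_distr prob_space_PiM prob_gaussian_vec im')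
    have "distr (noise_space S') (PB \<Otimes>\<^sub>M PB) (piG G) = PiM UNIV (\<lambda>_. distr (gaussian_vec (sysMu S') (mat 1)) borel (\<lambda>z. G *v z)) \<Otimes>\<^sub>M distr ?V' PB (\<lambda>y. y)"
      unfolding noise_space_def pg by (subst pair_measure_distr[OF gm im' sf', symmetric]) (simp add: d)
    then show ?thesis using assms(1) by simp
  qed
  finally show ?thesis .
qed

lemma transfer_fun:
  fixes S :: "('n::finite, 'm::finite, 'l::finite, 'p::finite) slsys"
    and S' :: "('n2::finite, 'm2::finite, 'l, 'p) slsys"
    and G :: "real^'l^'k::finite"
  assumes "sysPsi S = sysPsi S'" "G *v sysMu S = G *v sysMu S'"
    and "\<Phi> \<in> measurable (PB \<Otimes>\<^sub>M PB) N"
  shows "distr (noise_space S) N (\<lambda>\<omega>. \<Phi> (piG G \<omega>)) = distr (noise_space S') N (\<lambda>\<omega>. \<Phi> (piG G \<omega>))"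
proof -
  have "distr (noise_space S) N (\<lambda>\<omega>. \<Phi> (piG G \<omega>)) = distr (distr (noise_space S) (PB \<Otimes>\<^sub>M PB) (piG G)) N \<Phi>"
    using assms(3) piG_meas by (subst distr_distr) (auto simp: comp_def)
  also have "\<dots> = distr (distr (noise_space S') (PB \<Otimes>\<^sub>M PB) (piG G)) N \<Phi>"
    using transfer[OF assms(1,2)] by simp
  also have "\<dots> = distr (noise_space S') N (\<lambda>\<omega>. \<Phi> (piG G \<omega>))"
    using assms(3) piG_meas by (subst distr_distr) (auto simp: comp_def)
  finally show ?thesis .
qed



lemma ball_sub: "y \<in> ball z (\<rho>::real) \<Longrightarrow> ball y (\<rho> - dist z y) \<subseteq> ball z \<rho>"
proof
  fix x assume "y \<in> ball z \<rho>" "x \<in> ball y (\<rho> - dist z y)"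
  then show "x \<in> ball z \<rho>" using dist_triangle[of z x y] by (simp add: dist_commute)
qed

lemma supp_compl_ball:
  fixes D :: "'a::metric_space measure"
  assumes fin: "finite_measure D" and s: "sets D = sets borel" and z: "z \<notin> supp_dist D"
  obtains \<rho> where "\<rho> > 0" "ball z \<rho> \<in> null_sets D" "ball z \<rho> \<inter> supp_dist D = {}"
proof -
  interpret finite_measure D by fact
  from z obtain \<rho> where r: "\<rho> > 0" "\<not> measure D (ball z \<rho>) > 0" by (auto simp: supp_dist_def)
  have bs: "ball z \<rho> \<in> sets D" using s by simp
  then have m0: "measure D (ball z \<rho>) = 0" using r measure_nonneg[of D "ball z \<rho>"] by linarith
  have "y \<notin> supp_dist D" if "y \<in> ball z \<rho>" for y
  proof -
    have "ball y (\<rho> - dist z y) \<subseteq> ball z \<rho>" by (rule ball_sub[OF that])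
    then have "measure D (ball y (\<rho> - dist z y)) \<le> 0" using finite_measure_mono[OF _ bs] m0 by metis
    moreover have "\<rho> - dist z y > 0" using that by (simp add: dist_commute)
    ultimately show ?thesis unfolding supp_dist_def not_less by (metis (mono_tags, lifting) mem_Collect_eq not_less)
  qed
  moreover have "ball z \<rho> \<in> null_sets D"
    using bs m0 by (simp add: null_sets_def emeasure_eq_measure)
  ultimately show ?thesis using that r(1) by blast
qed

lemma supp_closed:
  fixes D :: "'a::metric_space measure"
  assumes fin: "finite_measure D" and s: "sets D = sets borel"
  shows "closed (supp_dist D)"
  unfolding closed_def open_contains_ball
proof
  fix z assume "z \<in> - supp_dist D"
  then obtain \<rho> where "\<rho> > 0" "ball z \<rho> \<inter> supp_dist D = {}"
    using supp_compl_ball[OF fin s] by blast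
  then show "\<exists>e>0. ball z e \<subseteq> - supp_dist D" by blast
qed

lemma supp_full:
  fixes D :: "'a::{metric_space, second_countable_topology} measure"
  assumes fin: "finite_measure D" and s: "sets D = sets borel" and X: "X \<in> sets borel"
  shows "measure D (X \<inter> supp_dist D) = measure D X"
proof -
  let ?F = "{ball z \<rho> | z \<rho>. \<rho> > 0 \<and> ball z \<rho> \<in> null_sets D}"
  obtain F' where F': "F' \<subseteq> ?F" "countable F'" "\<Union>F' = \<Union>?F"
    using Lindelof[of ?F] by auto
  have U: "\<Union>?F = - supp_dist D"
  proof
    show "\<Union>?F \<subseteq> - supp_dist D"
    proof
      fix y assume "y \<in> \<Union>?F"
      then obtain B where "B \<in> ?F" "y \<in> B" by (rule UnionE)
      then obtain z \<rho> where y: "y \<in> ball z \<rho>" "\<rho> > 0" "ball z \<rho> \<in> null_sets D" by blast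
      have "ball y (\<rho> - dist z y) \<subseteq> ball z \<rho>" by (rule ball_sub[OF y(1)])
      moreover have "ball y (\<rho> - dist z y) \<in> sets D" using s by simp
      ultimately have "ball y (\<rho> - dist z y) \<in> null_sets D"
        by (intro null_sets_subset[OF y(3)])
      moreover have "\<rho> - dist z y > 0" using y(1) by (simp add: dist_commute)
      ultimately have "\<exists>r>0. \<not> measure D (ball y r) > 0"
        by (intro exI[of _ "\<rho> - dist z y"]) (simp add: measure_def null_setsD1)
      then show "y \<in> - supp_dist D"
        unfolding supp_dist_def by simp
    qed
  next
    show "- supp_dist D \<subseteq> \<Union>?F"
    proof
      fix z assume "z \<in> - supp_dist D"
      then obtain \<rho> where "\<rho> > 0" "ball z \<rho> \<in> null_sets D"
        using supp_compl_ball[OF fin s] by blast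
      then have "ball z \<rho> \<in> ?F" by blast
      moreover have "z \<in> ball z \<rho>" using \<open>\<rho> > 0\<close> by simp
      ultimately show "z \<in> \<Union>?F" by (rule UnionI)
    qed
  qed
  have "(\<Union>B\<in>F'. B) \<in> null_sets D"
  proof (rule null_sets_UN'[OF F'(2)])
    fix B assume "B \<in> F'"
    have "B \<in> ?F" by (rule subsetD[OF F'(1) \<open>B \<in> F'\<close>])
    then show "B \<in> null_sets D" by (elim CollectE exE conjE) simp
  qed
  then have N: "- supp_dist D \<in> null_sets D" using F'(3) U by simp
  have "X \<inter> supp_dist D = X - (- supp_dist D)" by auto
  then show ?thesis using measure_Diff_null_set[OF _ N, of X] X s by simp
qed



lemma inv_apply:
  assumes "(Ti::real^'b::finite^'a::finite) ** (T::real^'a^'b) = mat 1"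
  shows "Ti *v (T *v x) = x"
  by (simp add: matrix_vector_mul_assoc assms)

lemma part_b:
  assumes "bis_equiv S3 S4" shows "ext_equiv S3 S4"
proof -
  obtain R where R: "total_rel R" "stoch_bisim S3 S4 R" using assms unfolding bis_equiv_def by blast
  have "subspace R" using R(2) unfolding stoch_bisim_def by (rule conjunct1)
  moreover have "ext_equiv_wrt S3 S4 R"
    unfolding ext_equiv_wrt_def
  proof (intro allI impI)
    fix x1 x2 u assume "(x1, x2) \<in> R"
    then show "stoch_equiv (noise_space S3) (\<lambda>t. out_traj S3 x1 u t) (noise_space S4) (\<lambda>t. out_traj S4 x2 u t)"
      using R(2) unfolding stoch_bisim_def by fast
  qed
  ultimately show ?thesis using R(1) unfolding ext_equiv_def by blast
qed

lemma part_a: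
  fixes S1 :: "('n1::finite, 'm::finite, 'l::finite, 'p::finite) slsys"
    and S2 :: "('n2::finite, 'm, 'l, 'p) slsys"
  assumes "lin_equiv S1 S2" shows "bis_equiv S1 S2"
proof -
  obtain T :: "real^'n1^'n2" and Ti :: "real^'n2^'n1" where
    TT: "T ** Ti = mat 1" "Ti ** T = mat 1" and
    A2: "sysA S2 = T ** sysA S1 ** Ti" and B2: "sysB S2 = T ** sysB S1" and
    C2: "sysC S2 = sysC S1 ** Ti" and G2: "sysG S2 = T ** sysG S1" and
    M2: "sysG S2 *v sysMu S2 = T *v (sysG S1 *v sysMu S1)" and Psi: "sysPsi S1 = sysPsi S2"
    using assms unfolding lin_equiv_def by blast
  define G where "G = sysG S1"
  have Gmu: "G *v sysMu S1 = G *v sysMu S2"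
  proof -
    have "Ti *v (sysG S2 *v sysMu S2) = G *v sysMu S2"
      unfolding G2 G_def by (simp add: matrix_vector_mul_assoc[symmetric] inv_apply[OF TT(2)])
    moreover have "Ti *v (sysG S2 *v sysMu S2) = G *v sysMu S1"
      unfolding M2 G_def by (simp add: inv_apply[OF TT(2)])
    ultimately show ?thesis by simp
  qed
  have st: "state_traj S2 (T *v x) u \<omega> t = T *v state_traj S1 x u \<omega> t" for x u \<omega> t
  proof (induct t)
    case 0 then show ?case by simp
  next
    case (Suc t)
    have "sysA S2 *v (T *v state_traj S1 x u \<omega> t) = T *v (sysA S1 *v state_traj S1 x u \<omega> t)"
      unfolding A2 by (simp add: matrix_vector_mul_assoc matrix_mul_assoc[symmetric] TT(2))
    then show ?case using Suc
      by (simp add: B2 G2 matrix_vector_mul_assoc[symmetric] matrix_vector_right_distrib)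
  qed
  have out: "out_traj S2 (T *v x) u t \<omega> = out_traj S1 x u t \<omega>" for x u t \<omega>
    unfolding out_traj_def st C2 by (simp add: matrix_vector_mul_assoc[symmetric] inv_apply[OF TT(2)])
  define \<Phi> where "\<Phi> x u t = (\<lambda>p::(nat \<Rightarrow> real^'n1) \<times> (nat \<Rightarrow> real^'p). trj (sysA S1) (sysB S1) x u (fst p) t)" for x u t
  have \<Phi>m: "\<Phi> x u t \<in> borel_measurable (PB \<Otimes>\<^sub>M PB)" for x u t
    unfolding \<Phi>_def by (rule measurable_compose[OF measurable_fst trj_meas])
  have st1: "state_traj S1 x u \<omega> t = \<Phi> x u t (piG G \<omega>)" for x u \<omega> t
    by (simp add: \<Phi>_def piG_def state_traj_trj G_def)
  have stm: "(\<lambda>\<omega>. state_traj S1 x u \<omega> t) \<in> borel_measurable (noise_space S1)" for x u t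
    unfolding st1 by (rule measurable_compose[OF piG_meas \<Phi>m])
  have sd: "state_dist S2 (T *v x) u t = distr (state_dist S1 x u t) borel (\<lambda>s. T *v s)" for x u t
  proof -
    have "state_dist S2 (T *v x) u t = distr (noise_space S2) borel (\<lambda>\<omega>. (\<lambda>p. T *v \<Phi> x u t p) (piG G \<omega>))"
      unfolding state_dist_def st st1 ..
    also have "\<dots> = distr (noise_space S1) borel (\<lambda>\<omega>. (\<lambda>p. T *v \<Phi> x u t p) (piG G \<omega>))"
      by (rule transfer_fun[symmetric, OF Psi Gmu]) (rule measurable_compose[OF \<Phi>m mv_meas])
    also have "\<dots> = distr (state_dist S1 x u t) borel (\<lambda>s. T *v s)"
      unfolding state_dist_def st1 using stm[of x u t] unfolding st1
      by (subst distr_distr) (auto simp: comp_def)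
    finally show ?thesis .
  qed
  have fin: "finite_measure (state_dist S1 x u t)" for x u t
    unfolding state_dist_def
    using prob_space.prob_space_distr[OF prob_noise stm] prob_space_def by blast
  have fin2: "finite_measure (state_dist S2 x u t)" for x u t
  proof -
    have "x = T *v (Ti *v x)" by (simp add: inv_apply[OF TT(1)])
    then have "(\<lambda>\<omega>. state_traj S2 x u \<omega> t) = (\<lambda>\<omega>. T *v state_traj S1 (Ti *v x) u \<omega> t)"
      using st[of "Ti *v x" u _ t] inv_apply[OF TT(1)] by simp
    moreover have "(\<lambda>\<omega>. T *v state_traj S1 (Ti *v x) u \<omega> t) \<in> borel_measurable (noise_space S2)"
      using measurable_compose[OF stm mv_meas] measurable_cong_sets[OF trans[OF sets_noise sets_noise[symmetric]] refl]
      by blast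
    ultimately have m: "(\<lambda>\<omega>. state_traj S2 x u \<omega> t) \<in> borel_measurable (noise_space S2)" by simp
    show ?thesis unfolding state_dist_def
      using prob_space.prob_space_distr[OF prob_noise m] unfolding prob_space_def by blast
  qed
  have sets1[simp]: "sets (state_dist S1 x u t) = sets borel" "space (state_dist S1 x u t) = UNIV" for x u t
    by (simp_all add: state_dist_def)
  have sets2[simp]: "sets (state_dist S2 x u t) = sets borel" "space (state_dist S2 x u t) = UNIV" for x u t
    by (simp_all add: state_dist_def)
  have oe: "stoch_equiv (noise_space S1) (\<lambda>t. out_traj S1 x u t) (noise_space S2) (\<lambda>t. out_traj S2 (T *v x) u t)" for x u
    unfolding stoch_equiv_def out
  proof (intro allI impI)
    fix J :: "nat set" assume "finite J"
    define \<Psi> where "\<Psi> = (\<lambda>p::(nat \<Rightarrow> real^'n1) \<times> (nat \<Rightarrow> real^'p). \<lambda>t\<in>J. sysC S1 *v \<Phi> x u t p + snd p t)"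
    have e: "(\<lambda>t\<in>J. out_traj S1 x u t \<omega>) = \<Psi> (piG G \<omega>)" for \<omega>
      by (simp add: \<Psi>_def out_traj_def st1) (simp add: piG_def)
    have \<Psi>m: "\<Psi> \<in> measurable (PB \<Otimes>\<^sub>M PB) (PiM J (\<lambda>_. borel))"
      unfolding \<Psi>_def
      by (intro measurable_restrict borel_measurable_add measurable_compose[OF \<Phi>m mv_meas]
            measurable_compose[OF measurable_snd measurable_component_singleton]) auto
    show "distr (noise_space S1) (PiM J (\<lambda>_. borel)) (\<lambda>\<omega>. \<lambda>t\<in>J. out_traj S1 x u t \<omega>) =
          distr (noise_space S2) (PiM J (\<lambda>_. borel)) (\<lambda>\<omega>. \<lambda>t\<in>J. out_traj S1 x u t \<omega>)"
      unfolding e by (rule transfer_fun[OF Psi Gmu \<Psi>m])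
  qed
  define R where "R = range (\<lambda>x. (x, T *v x))"
  have Rim: "R `` A = {y. Ti *v y \<in> A}" for A
  proof -
    have "y = T *v (Ti *v y)" for y by (simp add: inv_apply[OF TT(1)])
    then show ?thesis unfolding R_def by (auto simp: inv_apply[OF TT(2)])
  qed
  have Rcim: "converse R `` B = {x. T *v x \<in> B}" for B
    unfolding R_def by auto
  have tot: "total_rel R"
    unfolding total_rel_def Rim Rcim by auto
  have sub: "subspace R"
    unfolding subspace_def R_def
    by (auto simp: matrix_vector_right_distrib matrix_vector_mult_scaleR zero_prod_def)
  have "stoch_bisim S1 S2 R"
    unfolding stoch_bisim_def
  proof (intro conjI sub allI impI ballI)
    fix x1 x2 u t assume "(x1, x2) \<in> R"
    then have x2: "x2 = T *v x1" by (auto simp: R_def)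
    let ?D1 = "state_dist S1 x1 u t" and ?D2 = "state_dist S2 x2 u t"
    have D2: "?D2 = distr ?D1 borel (\<lambda>s. T *v s)" unfolding x2 by (rule sd)
    have Tm: "(\<lambda>s. T *v s) \<in> borel_measurable ?D1"
      using mv_meas measurable_cong_sets[OF sets1(1) refl] by blast
    have cl1: "supp_dist ?D1 \<in> sets borel" using supp_closed[OF fin] by simp
    have cl2: "supp_dist ?D2 \<in> sets borel" using supp_closed[OF fin2] by simp
    show "stoch_equiv (noise_space S1) (\<lambda>t. out_traj S1 x1 u t) (noise_space S2) (\<lambda>t. out_traj S2 x2 u t)"
      unfolding x2 by (rule oe)
    {
      fix X1 :: "(real^'n1) set" assume X1: "X1 \<in> sets borel"
      have Xs: "X1 \<inter> supp_dist ?D1 \<in> sets borel" using X1 cl1 by auto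
      have pre: "{y. Ti *v y \<in> X1 \<inter> supp_dist ?D1} \<in> sets borel"
        using measurable_sets[OF mv_meas[of Ti] Xs] by (simp add: vimage_def)
      have "measure ?D2 (R `` (X1 \<inter> supp_dist ?D1)) = measure ?D1 ((\<lambda>s. T *v s) -` {y. Ti *v y \<in> X1 \<inter> supp_dist ?D1} \<inter> UNIV)"
        unfolding Rim D2 by (subst measure_distr[OF Tm pre]) auto
      also have "\<dots> = measure ?D1 (X1 \<inter> supp_dist ?D1)" by (simp add: inv_apply[OF TT(2)] Int_def)
      also have "\<dots> = measure ?D1 X1" by (rule supp_full[OF fin sets1(1) X1])
      finally show "measure ?D1 X1 = measure ?D2 (R `` (X1 \<inter> supp_dist ?D1))" by simp
    }
    {
      fix X2 :: "(real^'n2) set" assume X2: "X2 \<in> sets borel"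
      have Xs: "X2 \<inter> supp_dist ?D2 \<in> sets borel" using X2 cl2 by auto
      have "measure ?D2 X2 = measure ?D2 (X2 \<inter> supp_dist ?D2)" by (rule supp_full[OF fin2 sets2(1) X2, symmetric])
      also have "\<dots> = measure ?D1 ((\<lambda>s. T *v s) -` (X2 \<inter> supp_dist ?D2) \<inter> UNIV)"
        unfolding D2 by (subst measure_distr[OF Tm Xs[unfolded D2]]) (auto simp: D2[symmetric])
      also have "\<dots> = measure ?D1 (converse R `` (X2 \<inter> supp_dist ?D2))"
        unfolding Rcim by (simp add: vimage_def)
      finally show "measure ?D2 X2 = measure ?D1 (converse R `` (X2 \<inter> supp_dist ?D2))" .
    }
  qed
  then show ?thesis using tot unfolding bis_equiv_def by blast
qed


theorem proposition1:
  fixes S1 :: "('n1::finite, 'm::finite, 'l::finite, 'p::finite) slsys"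
    and S2 :: "('n2::finite, 'm, 'l, 'p) slsys"
    and S3 :: "('n3::finite, 'm2::finite, 'l3::finite, 'p2::finite) slsys"
    and S4 :: "('n4::finite, 'm2, 'l4::finite, 'p2) slsys"
  assumes "valid_sys S1" and "valid_sys S2" and "valid_sys S3" and "valid_sys S4"
  shows "(lin_equiv S1 S2 \<longrightarrow> bis_equiv S1 S2) \<and> (bis_equiv S3 S4 \<longrightarrow> ext_equiv S3 S4)"
  using part_a part_b by blast

end
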